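(* For every term $t\in\Lambda^\infty$ there exists $s\in\Lambda^\infty$ with $t\to^\infty_N s$.
   Context: Fix an infinite set $V$ of variables and a set $C$ of constants with $V\cap C=\emptyset$, containing a distinguished constant $\bot$. $\Lambda^\infty$ is the set of infinitary lambda-terms: all finite and infinite terms generated coinductively by $t ::= c\mid x\mid t\,t\mid\lambda x.t$, identified up to $\alpha$-equivalence; $s[t/x]$ is capture-avoiding substitution; $\equiv$ is identity; an atom is a variable or constant. $\to_\beta$ is the compatible closure of $\{((\lambda x.s)t,s[t/x])\}$ (least relation containing these pairs and closed under $s\to s'\Rightarrow st\to s't, ts\to ts', \lambda x.s\to\lambda x.s'$), $\to^*_\beta$ its reflexive-transitive closure. A term is in head normal form (hnf) if it is $\lambda x_1\ldots x_m.\,a\,t_1\ldots t_n$ ($m,n\ge0$, $a$ an atom, $a\not\equiv\bot$); $t$ has a hnf if $t\to^*_\beta t'$ for some $t'$ in hnf. Weak head contraction $\to_w$ is the least relation with $(\lambda x.s)t\to_w s[t/x]$ and $s\to_w s'\Rightarrow st\to_w s't$; head contraction $\to_h$ is the least relation with $s\to_w s'\Rightarrow s\to_h s'$ and $s\to_h s'\Rightarrow\lambda x.s\to_h\lambda x.s'$; $\to^*_h$ is its reflexive-transitive closure. The relation $\to^\infty_N$ is the greatest relation such that whenever $t\to^\infty_N u$, either (i) $u\equiv\bot$ and $t$ has no hnf, or (ii) $u\equiv\lambda x_1\ldots x_n.\,a\,t_1'\ldots t_m'$ with $a$ an atom, $a\not\equiv\bot$, and there are $t_1,\ldots,t_m$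 with $t\to^*_h\lambda x_1\ldots x_n.\,a\,t_1\ldots t_m$ and $t_i\to^\infty_N t_i'$ for $i=1,\ldots,m$. *)

theory Defs
  imports Main
begin

text \<open>Infinitary lambda terms, nameless (de Bruijn) representation, which
identifies terms up to alpha-equivalence. Variables are indices in nat
(Var i under d binders with i >= d is the (i-d)-th free variable);
constants range over the type 'c, with a distinguished constant bt (the paper's bottom).\<close>

codatatype 'c trm = Var nat | Cst 'c | App "'c trm" "'c trm" | Lam "'c trm"

primcorec lift :: "nat \<Rightarrow> nat \<Rightarrow> 'c trm \<Rightarrow> 'c trm" where
  "lift k c t = (case t of
      Var i \<Rightarrow> Var (if i < c then i else i + k)
    | Cst a \<Rightarrow> Cst a
    | App s u \<Rightarrow> App (lift k c s) (lift k c u)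
    | Lam s \<Rightarrow> Lam (lift k (Suc c) s))"

primcorec subst :: "nat \<Rightarrow> 'c trm \<Rightarrow> 'c trm \<Rightarrow> 'c trm" where
  "subst k u s = (case s of
      Var i \<Rightarrow> (if i < k then Var i else if i = k then lift k 0 u else Var (i - 1))
    | Cst a \<Rightarrow> Cst a
    | App s1 s2 \<Rightarrow> App (subst k u s1) (subst k u s2)
    | Lam s1 \<Rightarrow> Lam (subst (Suc k) u s1))"

inductive beta :: "'c trm \<Rightarrow> 'c trm \<Rightarrow> bool" where
  beta_rule: "beta (App (Lam s) t) (subst 0 t s)"
| beta_appL: "beta s s' \<Longrightarrow> beta (App s t) (App s' t)"
| beta_appR: "beta s s' \<Longrightarrow> beta (App t s) (App t s')"
| beta_lam: "beta s s' \<Longrightarrow> beta (Lam s) (Lam s')"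

definition is_atom :: "'c trm \<Rightarrow> bool" where
  "is_atom a \<longleftrightarrow> (\<exists>i. a = Var i) \<or> (\<exists>c. a = Cst c)"

definition lams :: "nat \<Rightarrow> 'c trm \<Rightarrow> 'c trm" where
  "lams n s = (Lam ^^ n) s"

definition apps :: "'c trm \<Rightarrow> 'c trm list \<Rightarrow> 'c trm" where
  "apps a ts = foldl App a ts"

definition is_hnf :: "'c \<Rightarrow> 'c trm \<Rightarrow> bool" where
  "is_hnf bt t \<longleftrightarrow> (\<exists>n a ts. is_atom a \<and> a \<noteq> Cst bt \<and> t = lams n (apps a ts))"

definition has_hnf :: "'c \<Rightarrow> 'c trm \<Rightarrow> bool" where
  "has_hnf bt t \<longleftrightarrow> (\<exists>t'. beta\<^sup>*\<^sup>* t t' \<and> is_hnf bt t')"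

inductive whead :: "'c trm \<Rightarrow> 'c trm \<Rightarrow> bool" where
  "whead (App (Lam s) t) (subst 0 t s)"
| "whead s s' \<Longrightarrow> whead (App s t) (App s' t)"

inductive head :: "'c trm \<Rightarrow> 'c trm \<Rightarrow> bool" where
  "whead s s' \<Longrightarrow> head s s'"
| "head s s' \<Longrightarrow> head (Lam s) (Lam s')"

coinductive infN :: "'c \<Rightarrow> 'c trm \<Rightarrow> 'c trm \<Rightarrow> bool" for bt :: 'c where
  infN_bot: "\<not> has_hnf bt t \<Longrightarrow> infN bt t (Cst bt)"
| infN_hnf: "is_atom a \<Longrightarrow> a \<noteq> Cst bt \<Longrightarrow> head\<^sup>*\<^sup>* t (lams n (apps a ts)) \<Longrightarrow>
    list_all2 (infN bt) ts ts' \<Longrightarrow> infN bt t (lams n (apps a ts'))"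

end

theory Submission imports Defs begin

definition up :: "(nat \<Rightarrow> 'c trm) \<Rightarrow> nat \<Rightarrow> 'c trm" where
  "up \<sigma> = (\<lambda>i. case i of 0 \<Rightarrow> Var 0 | Suc j \<Rightarrow> lift 1 0 (\<sigma> j))"

primcorec ssub :: "(nat \<Rightarrow> 'c trm) \<Rightarrow> 'c trm \<Rightarrow> 'c trm" where
  "ssub \<sigma> t = (case t of Var i \<Rightarrow> \<sigma> i | Cst a \<Rightarrow> Cst a
     | App s u \<Rightarrow> App (ssub \<sigma> s) (ssub \<sigma> u) | Lam s \<Rightarrow> Lam (ssub (up \<sigma>) s))"

lemma ssub_simps[simp]:
  "ssub \<sigma> (Var i) = \<sigma> i" "ssub \<sigma> (Cst a) = Cst a"
  "ssub \<sigma> (App s u) = App (ssub \<sigma> s) (ssub \<sigma> u)" "ssub \<sigma> (Lam s) = Lam (ssub (up \<sigma>) s)"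
  by (subst ssub.code; simp)+

lemma lift_simps[simp]:
  "lift k c (Var i) = Var (if i < c then i else i + k)" "lift k c (Cst a) = Cst a"
  "lift k c (App s u) = App (lift k c s) (lift k c u)" "lift k c (Lam s) = Lam (lift k (Suc c) s)"
  by (subst lift.code; simp)+

lemma subst_simps[simp]:
  "subst k u (Var i) = (if i < k then Var i else if i = k then lift k 0 u else Var (i - 1))"
  "subst k u (Cst a) = Cst a"
  "subst k u (App s1 s2) = App (subst k u s1) (subst k u s2)" "subst k u (Lam s) = Lam (subst (Suc k) u s)"
  by (subst subst.code; simp)+

lemma trm_eqI:
  assumes "R a b"
  and step: "\<And>a b. R a b \<Longrightarrow> a = b \<or> (\<exists>x y x' y'. a = App x y \<and> b = App x' y' \<and> (R x x' \<or> x = x') \<and> (R y y' \<or> y = y'))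
     \<or> (\<exists>x x'. a = Lam x \<and> b = Lam x' \<and> (R x x' \<or> x = x'))"
  shows "a = b"
  apply (rule trm.coinduct_strong[of R, OF assms(1)])
  subgoal for a b using step[of a b] by auto
  done

lemma up_Var: "up Var = Var"
  by (rule ext) (simp add: up_def split: nat.split)

lemma up_0[simp]: "up \<sigma> 0 = Var 0" and up_Suc[simp]: "up \<sigma> (Suc i) = lift 1 0 (\<sigma> i)"
  by (simp_all add: up_def)

lemma ssub_Var: "ssub Var t = t"
proof -
  define R where "R a b \<longleftrightarrow> (\<exists>r. a = ssub Var r \<and> b = r)" for a b :: "'a trm"
  have "R (ssub Var t) t" unfolding R_def by blast
  then show ?thesis
  proof (rule trm_eqI)
    fix a b assume "R a b"
    then obtain r where r: "a = ssub Var r" "b = r" unfolding R_def by blast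
    show "a = b \<or> (\<exists>x y x' y'. a = App x y \<and> b = App x' y' \<and> (R x x' \<or> x = x') \<and> (R y y' \<or> y = y'))
     \<or> (\<exists>x x'. a = Lam x \<and> b = Lam x' \<and> (R x x' \<or> x = x'))"
      using r by (cases r) (auto simp: R_def up_Var)
  qed
qed

lemma up_ren: "up (\<lambda>i. Var (f i)) = (\<lambda>i. Var (case i of 0 \<Rightarrow> 0 | Suc j \<Rightarrow> Suc (f j)))"
  by (rule ext) (simp add: up_def split: nat.split)

lemma ssub_ren_ssub:
  assumes "\<forall>i. \<theta> i = \<tau> (f i)"
  shows "ssub \<tau> (ssub (\<lambda>i. Var (f i)) r) = ssub \<theta> r"
proof -
  define R where "R a b \<longleftrightarrow> (\<exists>\<tau> f \<theta> r. a = ssub \<tau> (ssub (\<lambda>i. Var (f i)) r) \<and> b = ssub \<theta> r \<and> (\<forall>i. \<theta> i = \<tau> (f i)))" for a b :: "'a trm"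
  have "R (ssub \<tau> (ssub (\<lambda>i. Var (f i)) r)) (ssub \<theta> r)" using assms unfolding R_def by blast
  then show ?thesis
  proof (rule trm_eqI)
    fix a b assume "R a b"
    then obtain \<tau> f \<theta> r where r: "a = ssub \<tau> (ssub (\<lambda>i. Var (f i)) r)" "b = ssub \<theta> r" "\<forall>i. \<theta> i = \<tau> (f i)"
      unfolding R_def by blast
    show "a = b \<or> (\<exists>x y x' y'. a = App x y \<and> b = App x' y' \<and> (R x x' \<or> x = x') \<and> (R y y' \<or> y = y'))
     \<or> (\<exists>x x'. a = Lam x \<and> b = Lam x' \<and> (R x x' \<or> x = x'))"
    proof (cases r)
      case (Lam s)
      have "\<forall>i. up \<theta> i = up \<tau> (case i of 0 \<Rightarrow> 0 | Suc j \<Rightarrow> Suc (f j))"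
        using r by (auto simp: up_def split: nat.split)
      then have "R (ssub (up \<tau>) (ssub (up (\<lambda>i. Var (f i))) s)) (ssub (up \<theta>) s)"
        unfolding R_def up_ren by blast
      then show ?thesis using r Lam by simp
    next
      case (App x y)
      have "R (ssub \<tau> (ssub (\<lambda>i. Var (f i)) x)) (ssub \<theta> x)" "R (ssub \<tau> (ssub (\<lambda>i. Var (f i)) y)) (ssub \<theta> y)"
        unfolding R_def using r(3) by blast+
      then show ?thesis using r App by simp
    qed (use r in auto)
  qed
qed

lemma lift_ssub: "lift k c t = ssub (\<lambda>i. Var (if i < c then i else i + k)) t"
proof -
  define R where "R a b \<longleftrightarrow> (\<exists>c r. a = lift k c r \<and> b = ssub (\<lambda>i. Var (if i < c then i else i + k)) r)" for a b :: "'a trm"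
  have "R (lift k c t) (ssub (\<lambda>i. Var (if i < c then i else i + k)) t)" unfolding R_def by blast
  then show ?thesis
  proof (rule trm_eqI)
    fix a b assume "R a b"
    then obtain c r where r: "a = lift k c r" "b = ssub (\<lambda>i. Var (if i < c then i else i + k)) r"
      unfolding R_def by blast
    have u: "up (\<lambda>i. Var (if i < c then i else i + k)) = (\<lambda>i. Var (if i < Suc c then i else i + k))"
      by (rule ext) (simp add: up_def split: nat.split)
    show "a = b \<or> (\<exists>x y x' y'. a = App x y \<and> b = App x' y' \<and> (R x x' \<or> x = x') \<and> (R y y' \<or> y = y'))
     \<or> (\<exists>x x'. a = Lam x \<and> b = Lam x' \<and> (R x x' \<or> x = x'))"
      using r by (cases r) (auto simp: R_def u)
  qed
qed

lemma lift1: "lift (Suc 0) 0 t = ssub (\<lambda>i. Var (Suc i)) t"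
  by (simp add: lift_ssub)

lemma ssub_ssub_ren:
  assumes "\<forall>i. \<theta> i = ssub (\<lambda>j. Var (f j)) (\<sigma> i)"
  shows "ssub (\<lambda>j. Var (f j)) (ssub \<sigma> r) = ssub \<theta> r"
proof -
  define R where "R a b \<longleftrightarrow> (\<exists>f \<sigma> \<theta> r. a = ssub (\<lambda>j. Var (f j)) (ssub \<sigma> r) \<and> b = ssub \<theta> r \<and> (\<forall>i. \<theta> i = ssub (\<lambda>j. Var (f j)) (\<sigma> i)))" for a b :: "'a trm"
  have "R (ssub (\<lambda>j. Var (f j)) (ssub \<sigma> r)) (ssub \<theta> r)" using assms unfolding R_def by blast
  then show ?thesis
  proof (rule trm_eqI)
    fix a b assume "R a b"
    then obtain f \<sigma> \<theta> r where r: "a = ssub (\<lambda>j. Var (f j)) (ssub \<sigma> r)" "b = ssub \<theta> r" "\<forall>i. \<theta> i = ssub (\<lambda>j. Var (f j)) (\<sigma> i)"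
      unfolding R_def by blast
    show "a = b \<or> (\<exists>x y x' y'. a = App x y \<and> b = App x' y' \<and> (R x x' \<or> x = x') \<and> (R y y' \<or> y = y'))
     \<or> (\<exists>x x'. a = Lam x \<and> b = Lam x' \<and> (R x x' \<or> x = x'))"
    proof (cases r)
      case (Lam s)
      define f' where "f' = (\<lambda>i. case i of 0 \<Rightarrow> 0 | Suc j \<Rightarrow> Suc (f j))"
      have "\<forall>i. up \<theta> i = ssub (\<lambda>j. Var (f' j)) (up \<sigma> i)"
      proof
        fix i show "up \<theta> i = ssub (\<lambda>j. Var (f' j)) (up \<sigma> i)"
        proof (cases i)
          case 0 then show ?thesis by (simp add: f'_def)
        next
          case (Suc n)
          have "up \<theta> i = ssub (\<lambda>i. Var (Suc i)) (ssub (\<lambda>j. Var (f j)) (\<sigma> n))"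
            using Suc r by (simp add: lift1)
          also have "\<dots> = ssub (\<lambda>j. Var (Suc (f j))) (\<sigma> n)"
            by (rule ssub_ren_ssub) simp
          also have "\<dots> = ssub (\<lambda>j. Var (f' j)) (ssub (\<lambda>i. Var (Suc i)) (\<sigma> n))"
            by (rule ssub_ren_ssub[symmetric]) (simp add: f'_def)
          finally show ?thesis using Suc by (simp add: lift1)
        qed
      qed
      then have "R (ssub (up (\<lambda>j. Var (f j))) (ssub (up \<sigma>) s)) (ssub (up \<theta>) s)"
        unfolding R_def up_ren f'_def by blast
      then show ?thesis using r Lam by simp
    next
      case (App x y)
      have "R (ssub (\<lambda>j. Var (f j)) (ssub \<sigma> x)) (ssub \<theta> x)" "R (ssub (\<lambda>j. Var (f j)) (ssub \<sigma> y)) (ssub \<theta> y)"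
        unfolding R_def using r(3) by blast+
      then show ?thesis using r App by simp
    qed (use r in auto)
  qed
qed

lemma ssub_ssub:
  assumes "\<forall>i. \<theta> i = ssub \<tau> (\<sigma> i)"
  shows "ssub \<tau> (ssub \<sigma> r) = ssub \<theta> r"
proof -
  define R where "R a b \<longleftrightarrow> (\<exists>\<tau> \<sigma> \<theta> r. a = ssub \<tau> (ssub \<sigma> r) \<and> b = ssub \<theta> r \<and> (\<forall>i. \<theta> i = ssub \<tau> (\<sigma> i)))" for a b :: "'a trm"
  have "R (ssub \<tau> (ssub \<sigma> r)) (ssub \<theta> r)" using assms unfolding R_def by blast
  then show ?thesis
  proof (rule trm_eqI)
    fix a b assume "R a b"
    then obtain \<tau> \<sigma> \<theta> r where r: "a = ssub \<tau> (ssub \<sigma> r)" "b = ssub \<theta> r" "\<forall>i. \<theta> i = ssub \<tau> (\<sigma> i)"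
      unfolding R_def by blast
    show "a = b \<or> (\<exists>x y x' y'. a = App x y \<and> b = App x' y' \<and> (R x x' \<or> x = x') \<and> (R y y' \<or> y = y'))
     \<or> (\<exists>x x'. a = Lam x \<and> b = Lam x' \<and> (R x x' \<or> x = x'))"
    proof (cases r)
      case (Lam s)
      have "\<forall>i. up \<theta> i = ssub (up \<tau>) (up \<sigma> i)"
      proof
        fix i show "up \<theta> i = ssub (up \<tau>) (up \<sigma> i)"
        proof (cases i)
          case 0 then show ?thesis by simp
        next
          case (Suc n)
          have "up \<theta> i = ssub (\<lambda>i. Var (Suc i)) (ssub \<tau> (\<sigma> n))"
            using Suc r by (simp add: lift1)
          also have "\<dots> = ssub (\<lambda>j. lift 1 0 (\<tau> j)) (\<sigma> n)"
            by (rule ssub_ssub_ren) (simp add: lift1)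
          also have "\<dots> = ssub (up \<tau>) (ssub (\<lambda>i. Var (Suc i)) (\<sigma> n))"
            by (rule ssub_ren_ssub[symmetric]) simp
          finally show ?thesis using Suc by (simp add: lift1)
        qed
      qed
      then have "R (ssub (up \<tau>) (ssub (up \<sigma>) s)) (ssub (up \<theta>) s)"
        unfolding R_def by blast
      then show ?thesis using r Lam by simp
    next
      case (App x y)
      have "R (ssub \<tau> (ssub \<sigma> x)) (ssub \<theta> x)" "R (ssub \<tau> (ssub \<sigma> y)) (ssub \<theta> y)"
        unfolding R_def using r(3) by blast+
      then show ?thesis using r App by simp
    qed (use r in auto)
  qed
qed

definition sk :: "nat \<Rightarrow> 'c trm \<Rightarrow> nat \<Rightarrow> 'c trm" where
  "sk k u i = (if i < k then Var i else if i = k then lift k 0 u else Var (i - 1))"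

lemma lift_lift0: "lift (Suc 0) 0 (lift k 0 u) = lift (Suc k) 0 u"
proof -
  have "lift 1 0 (lift k 0 u) = ssub (\<lambda>i. Var (Suc i)) (ssub (\<lambda>i. Var (i + k)) u)"
    by (simp add: lift_ssub)
  also have "\<dots> = ssub (\<lambda>i. Var (i + Suc k)) u" by (rule ssub_ren_ssub) simp
  also have "\<dots> = lift (Suc k) 0 u" by (simp add: lift_ssub)
  finally show ?thesis by simp
qed

lemma subst_ssub: "subst k u s = ssub (sk k u) s"
proof -
  define R where "R a b \<longleftrightarrow> (\<exists>k r. a = subst k u r \<and> b = ssub (sk k u) r)" for a b
  have "R (subst k u s) (ssub (sk k u) s)" unfolding R_def by blast
  then show ?thesis
  proof (rule trm_eqI)
    fix a b assume "R a b"
    then obtain k r where r: "a = subst k u r" "b = ssub (sk k u) r"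
      unfolding R_def by blast
    have u: "up (sk k u) = sk (Suc k) u"
      by (rule ext) (auto simp: up_def sk_def lift_lift0 split: nat.split)
    show "a = b \<or> (\<exists>x y x' y'. a = App x y \<and> b = App x' y' \<and> (R x x' \<or> x = x') \<and> (R y y' \<or> y = y'))
     \<or> (\<exists>x x'. a = Lam x \<and> b = Lam x' \<and> (R x x' \<or> x = x'))"
      using r by (cases r) (auto simp: R_def u sk_def)
  qed
qed

definition scons :: "'c trm \<Rightarrow> nat \<Rightarrow> 'c trm" where
  "scons u i = (case i of 0 \<Rightarrow> u | Suc j \<Rightarrow> Var j)"

lemma lift0: "lift 0 c u = u"
proof -
  have eq: "(\<lambda>i. Var (if i < c then i else i + 0)) = (Var :: nat \<Rightarrow> 'c trm)" by (rule ext) simp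
  show ?thesis unfolding lift_ssub eq by (rule ssub_Var)
qed

lemma subst0_ssub: "subst 0 u s = ssub (scons u) s"
proof -
  have "sk 0 u = scons u" by (rule ext) (simp add: sk_def scons_def lift0 split: nat.split)
  then show ?thesis by (simp add: subst_ssub)
qed

lemma beta_ssub: "subst 0 (ssub \<sigma> u) (ssub (up \<sigma>) s) = ssub (scons (ssub \<sigma> u) ) (ssub (up \<sigma>) s)"
  by (simp add: subst0_ssub)

definition scons2 :: "'c trm \<Rightarrow> (nat \<Rightarrow> 'c trm) \<Rightarrow> nat \<Rightarrow> 'c trm" where
  "scons2 u \<sigma> i = (case i of 0 \<Rightarrow> u | Suc j \<Rightarrow> \<sigma> j)"

lemma subst_up: "subst 0 w (ssub (up \<sigma>) s) = ssub (scons2 w \<sigma>) s"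
  unfolding subst0_ssub
proof (rule ssub_ssub, rule allI)
  fix i show "scons2 w \<sigma> i = ssub (scons w) (up \<sigma> i)"
  proof (cases i)
    case (Suc n)
    have "ssub (scons w) (ssub (\<lambda>i. Var (Suc i)) (\<sigma> n)) = ssub Var (\<sigma> n)"
      by (rule ssub_ren_ssub) (simp add: scons_def)
    then show ?thesis using Suc by (simp add: lift1 ssub_Var scons2_def)
  qed (simp add: scons_def scons2_def)
qed

lemma ssub_subst0: "ssub \<sigma> (subst 0 u s) = ssub (scons2 (ssub \<sigma> u) \<sigma>) s"
  unfolding subst0_ssub
  by (rule ssub_ssub) (simp add: scons_def scons2_def split: nat.split)


subsection \<open>Parallel reduction\<close>

inductive par :: "'c trm \<Rightarrow> 'c trm \<Rightarrow> bool" where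
  p_refl: "par r r"
| p_app: "par s s' \<Longrightarrow> par u u' \<Longrightarrow> par (App s u) (App s' u')"
| p_lam: "par s s' \<Longrightarrow> par (Lam s) (Lam s')"
| p_beta: "par s s' \<Longrightarrow> par u u' \<Longrightarrow> par (App (Lam s) u) (subst 0 u' s')"
| p_sub: "par s s' \<Longrightarrow> (\<forall>i. par (\<sigma> i) (\<sigma>' i)) \<Longrightarrow> par (ssub \<sigma> s) (ssub \<sigma>' s')"

lemma par_subst0: "par s s' \<Longrightarrow> par u u' \<Longrightarrow> par (subst 0 u s) (subst 0 u' s')"
  unfolding subst0_ssub
  by (rule p_sub) (auto simp: scons_def intro: p_refl split: nat.split)

lemma apps_Nil[simp]: "apps a [] = a"
  and apps_snoc[simp]: "apps a (ts @ [u]) = App (apps a ts) u"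
  and apps_Cons: "apps a (u # ts) = apps (App a u) ts"
  and apps_append: "apps (apps a xs) ys = apps a (xs @ ys)"
  by (simp_all add: apps_def)

lemma apps_single[simp]: "apps a [u] = App a u"
  by (simp add: apps_def)

lemma apps_Cons_App: "\<exists>x y. apps v (u # us) = App x y"
  by (cases "u # us" rule: rev_exhaust) auto

lemma apps_Cons_not_Lam[simp]: "apps v (u # us) \<noteq> Lam p"
  using apps_Cons_App[of v u us] by auto

lemma par_apps: "list_all2 par us us' \<Longrightarrow> par v v' \<Longrightarrow> par (apps v us) (apps v' us')"
proof (induction us us' arbitrary: v v' rule: list_all2_induct)
  case Nil then show ?case by simp
next
  case (Cons x xs y ys) then show ?case by (simp add: apps_Cons p_app)
qed

lemma ssub_apps: "ssub \<sigma> (apps h rs) = apps (ssub \<sigma> h) (map (ssub \<sigma>) rs)"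
  by (induction rs rule: rev_induct) simp_all

lemma no_whead_Lam: "\<not> whead (Lam p) x"
  by (auto elim: whead.cases)

lemma apps_atom_not_Lam: "is_atom a \<Longrightarrow> apps a ts \<noteq> Lam p"
  by (cases ts rule: rev_exhaust) (auto simp: is_atom_def)

lemma no_whead_atom_apps: "is_atom a \<Longrightarrow> \<not> whead (apps a ts) x"
proof (induction ts arbitrary: x rule: rev_induct)
  case Nil then show ?case by (auto simp: is_atom_def elim: whead.cases)
next
  case (snoc t ts)
  show ?case
  proof
    assume "whead (apps a (ts @ [t])) x"
    then have "whead (App (apps a ts) t) x" by simp
    then show False
    proof (cases rule: whead.cases)
      case (1 s) then show False using apps_atom_not_Lam[OF snoc.prems] by simp
    next
      case (2 s') then show False using snoc.IH[OF snoc.prems] by blast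
    qed
  qed
qed

lemma apps_atom_eq: "is_atom a \<Longrightarrow> apps a ts = apps T0 us \<Longrightarrow> \<exists>ts0. T0 = apps a ts0 \<and> ts = ts0 @ us"
proof (induction us arbitrary: ts rule: rev_induct)
  case Nil then show ?case by auto
next
  case (snoc u us)
  show ?case
  proof (cases ts rule: rev_exhaust)
    case Nil
    then show ?thesis using snoc.prems by (auto simp: is_atom_def)
  next
    case (snoc ts' t)
    with snoc.prems have "apps a ts' = apps T0 us" "t = u" by simp_all
    from snoc.IH[OF snoc.prems(1) this(1)] obtain ts0 where "T0 = apps a ts0" "ts' = ts0 @ us" by blast
    then show ?thesis using \<open>t = u\<close> snoc by simp
  qed
qed

lemma whead_app_ctx: "whead x y \<Longrightarrow> whead (apps x us) (apps y us)"
  by (induction us arbitrary: x y) (auto simp: apps_Cons intro: whead.intros)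

lemma wheads_app_ctx: "whead\<^sup>*\<^sup>* x y \<Longrightarrow> whead\<^sup>*\<^sup>* (apps x us) (apps y us)"
  by (induction rule: rtranclp_induct) (auto intro: rtranclp.rtrancl_into_rtrancl whead_app_ctx)

lemma whead_apps_cases:
  "whead (apps v (u # us)) x \<Longrightarrow> (\<exists>p. v = Lam p \<and> x = apps (subst 0 u p) us) \<or> (\<exists>v''. whead v v'' \<and> x = apps v'' (u # us))"
proof (induction us arbitrary: x rule: rev_induct)
  case Nil then show ?case by (auto elim: whead.cases)
next
  case (snoc w us)
  from snoc.prems have "whead (App (apps v (u # us)) w) x" using apps_snoc[of v "u # us" w] by simp
  then show ?case
  proof (cases rule: whead.cases)
    case (1 s)
    then show ?thesis by simp
  next
    case (2 s')
    from snoc.IH[OF 2(2)] show ?thesis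
    proof
      assume "\<exists>p. v = Lam p \<and> s' = apps (subst 0 u p) us"
      then obtain p where "v = Lam p" "s' = apps (subst 0 u p) us" by blast
      then show ?thesis using 2(1) by simp
    next
      assume "\<exists>v''. whead v v'' \<and> s' = apps v'' (u # us)"
      then obtain v'' where "whead v v''" "s' = apps v'' (u # us)" by blast
      moreover have E: "apps v'' (u # us @ [w]) = App (apps v'' (u # us)) w"
        using apps_snoc[of v'' "u # us" w] by (simp del: apps_snoc)
      ultimately have "x = apps v'' (u # us @ [w])" using 2(1) by (simp del: apps_snoc)
      then show ?thesis using \<open>whead v v''\<close> by blast
    qed
  qed
qed


lemma whead_pow_apps:
  "(whead ^^ j) (apps v' us') T \<Longrightarrow>
    (\<exists>T0. (whead ^^ j) v' T0 \<and> T = apps T0 us') \<or>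
    (\<exists>i p' u1 rest. i < j \<and> us' = u1 # rest \<and> (whead ^^ i) v' (Lam p') \<and>
        (whead ^^ (j - i - 1)) (apps (subst 0 u1 p') rest) T)"
proof (induction j arbitrary: v')
  case 0 then show ?case by auto
next
  case (Suc j)
  from relpowp_Suc_D2[OF Suc.prems] obtain x where x: "whead (apps v' us') x" "(whead ^^ j) x T" by blast
  show ?case
  proof (cases us')
    case Nil
    then have "whead v' x" using x by simp
    have "(whead ^^ j) (apps x us') T" using x Nil by simp
    from Suc.IH[OF this] have "(whead ^^ j) x T" using Nil by auto
    then have "(whead ^^ Suc j) v' T" using \<open>whead v' x\<close> by (rule relpowp_Suc_I2[rotated])
    then show ?thesis using Nil by simp
  next
    case (Cons u1 rest)
    from x(1) Cons have "whead (apps v' (u1 # rest)) x" by simp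
    from whead_apps_cases[OF this]
    show ?thesis
    proof (elim disjE exE conjE)
      fix p assume "v' = Lam p" "x = apps (subst 0 u1 p) rest"
      then show ?thesis using x(2) Cons by (intro disjI2 exI[of _ 0]) auto
    next
      fix v'' assume v'': "whead v' v''" "x = apps v'' (u1 # rest)"
      from Suc.IH[of v''] x(2) v'' Cons
      have "(\<exists>T0. (whead ^^ j) v'' T0 \<and> T = apps T0 us') \<or>
          (\<exists>i p' u1 rest. i < j \<and> us' = u1 # rest \<and> (whead ^^ i) v'' (Lam p') \<and>
            (whead ^^ (j - i - 1)) (apps (subst 0 u1 p') rest) T)" by simp
      then show ?thesis
      proof (elim disjE exE conjE)
        fix T0 assume "(whead ^^ j) v'' T0" "T = apps T0 us'"
        then have "(whead ^^ Suc j) v' T0" using v''(1) relpowp_Suc_I2[of whead v' v'' j T0] by blast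
        then show ?thesis using \<open>T = apps T0 us'\<close> by blast
      next
        fix i p' u1' rest' assume h: "i < j" "us' = u1' # rest'" "(whead ^^ i) v'' (Lam p')"
          "(whead ^^ (j - i - 1)) (apps (subst 0 u1' p') rest') T"
        have "(whead ^^ Suc i) v' (Lam p')" using h(3) v''(1) relpowp_Suc_I2[of whead v' v'' i] by blast
        moreover have "Suc j - Suc i - 1 = j - i - 1" by simp
        ultimately show ?thesis using h by (intro disjI2 exI[of _ "Suc i"]) auto
      qed
    qed
  qed
qed

definition Q :: "nat \<Rightarrow> 'c trm \<Rightarrow> 'c trm \<Rightarrow> bool" where
  "Q k t t' \<longleftrightarrow>
    (\<forall>j a ts'. j \<le> k \<longrightarrow> is_atom a \<longrightarrow> (whead ^^ j) t' (apps a ts') \<longrightarrow>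
        (\<exists>ts. whead\<^sup>*\<^sup>* t (apps a ts) \<and> list_all2 par ts ts')) \<and>
    (\<forall>j p'. j \<le> k \<longrightarrow> (whead ^^ j) t' (Lam p') \<longrightarrow> (\<exists>p. whead\<^sup>*\<^sup>* t (Lam p) \<and> par p p'))"

lemma relpow_irred: "(whead ^^ j) x y \<Longrightarrow> (\<And>z. \<not> whead x z) \<Longrightarrow> y = x"
proof (cases j)
  case (Suc n)
  assume "(whead ^^ j) x y" "\<And>z. \<not> whead x z"
  then show ?thesis using Suc relpowp_Suc_D2[of n whead x y] by blast
qed simp

lemma Q_Lam: "par x x' \<Longrightarrow> Q k (Lam x) (Lam x')"
  unfolding Q_def
proof (intro conjI allI impI)
  fix j a ts' assume "is_atom a" "(whead ^^ j) (Lam x') (apps a ts')"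
  then have "apps a ts' = Lam x'" using relpow_irred no_whead_Lam by metis
  with \<open>is_atom a\<close> show "\<exists>ts. whead\<^sup>*\<^sup>* (Lam x) (apps a ts) \<and> list_all2 par ts ts'"
    using apps_atom_not_Lam by blast
next
  fix j p' assume "par x x'" "(whead ^^ j) (Lam x') (Lam p')"
  then have "Lam p' = Lam x'" using relpow_irred no_whead_Lam by metis
  then show "\<exists>p. whead\<^sup>*\<^sup>* (Lam x) (Lam p) \<and> par p p'" using \<open>par x x'\<close> by auto
qed

lemma Q_atom: "is_atom a \<Longrightarrow> Q k a a"
  unfolding Q_def
proof (intro conjI allI impI)
  fix j b ts' assume a: "is_atom a" and "is_atom b" "(whead ^^ j) a (apps b ts')"
  then have "apps b ts' = a" using relpow_irred no_whead_atom_apps[of a "[]"] by (metis apps_Nil)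
  then show "\<exists>ts. whead\<^sup>*\<^sup>* a (apps b ts) \<and> list_all2 par ts ts'"
    by (intro exI[of _ ts']) (auto simp: list_all2_refl p_refl)
next
  fix j p' assume a: "is_atom a" and "(whead ^^ j) a (Lam p')"
  then have "Lam p' = a" using relpow_irred no_whead_atom_apps[of a "[]"] by (metis apps_Nil)
  then show "\<exists>p. whead\<^sup>*\<^sup>* a (Lam p) \<and> par p p'" using a by (auto simp: is_atom_def)
qed

lemma Q_step: "whead t t1 \<Longrightarrow> Q k t1 t' \<Longrightarrow> Q k t t'"
  unfolding Q_def by (meson converse_rtranclp_into_rtranclp)


lemma QD1: "Q k t t' \<Longrightarrow> j \<le> k \<Longrightarrow> is_atom a \<Longrightarrow> (whead ^^ j) t' (apps a ts') \<Longrightarrow>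
    \<exists>ts. whead\<^sup>*\<^sup>* t (apps a ts) \<and> list_all2 par ts ts'"
  unfolding Q_def by blast

lemma QD2: "Q k t t' \<Longrightarrow> j \<le> k \<Longrightarrow> (whead ^^ j) t' (Lam p') \<Longrightarrow>
    \<exists>p. whead\<^sup>*\<^sup>* t (Lam p) \<and> par p p'"
  unfolding Q_def by blast

lemma Q_APP:
  fixes v v' :: "'c trm"
  assumes IH: "\<forall>m<k. \<forall>x x' :: 'c trm. par x x' \<longrightarrow> Q m x x'"
    and pv: "par v v'" and qv: "Q k v v'" and pus: "list_all2 par us us'"
  shows "Q k (apps v us) (apps v' us')"
proof -
  have redex: "\<exists>x. whead\<^sup>*\<^sup>* (apps v us) x \<and> Q (j - i - 1) x (apps (subst 0 u1' p') rest')"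
    if h: "i < j" "j \<le> k" "us' = u1' # rest'" "(whead ^^ i) v' (Lam p')" for i j p' u1' rest'
  proof -
    have "i \<le> k" using h by simp
    from QD2[OF qv this h(4)] obtain p where p: "whead\<^sup>*\<^sup>* v (Lam p)" "par p p'" by blast
    from pus h(3) have "list_all2 par us (u1' # rest')" by simp
    then obtain u1 rest where us: "us = u1 # rest" "par u1 u1'" "list_all2 par rest rest'"
      unfolding list_all2_Cons2 by blast
    define x where "x = apps (subst 0 u1 p) rest"
    have w1: "whead\<^sup>*\<^sup>* (apps v us) (apps (Lam p) us)" using p(1) by (rule wheads_app_ctx)
    have w2: "whead (apps (Lam p) us) x"
      unfolding x_def us(1) apps_Cons by (rule whead_app_ctx) (rule whead.intros)
    have w: "whead\<^sup>*\<^sup>* (apps v us) x" using w1 w2 by (rule rtranclp.rtrancl_into_rtrancl)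
    have pr: "par x (apps (subst 0 u1' p') rest')"
      unfolding x_def by (rule par_apps[OF us(3) par_subst0[OF p(2) us(2)]])
    have lt: "j - i - 1 < k" using h by simp
    have "Q (j - i - 1) x (apps (subst 0 u1' p') rest')" by (rule IH[rule_format, OF lt pr])
    with w show ?thesis by blast
  qed
  show ?thesis
    unfolding Q_def
  proof (intro conjI allI impI)
    fix j a ts' assume j: "j \<le> k" and a: "is_atom a" and red: "(whead ^^ j) (apps v' us') (apps a ts')"
    from whead_pow_apps[OF red] show "\<exists>ts. whead\<^sup>*\<^sup>* (apps v us) (apps a ts) \<and> list_all2 par ts ts'"
    proof (elim disjE exE conjE)
      fix T0 assume T0: "(whead ^^ j) v' T0" "apps a ts' = apps T0 us'"
      from apps_atom_eq[OF a T0(2)] obtain ts0' where ts0': "T0 = apps a ts0'" "ts' = ts0' @ us'" by blast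
      from QD1[OF qv j a, of ts0'] T0(1) ts0'(1) obtain ts0 where ts0: "whead\<^sup>*\<^sup>* v (apps a ts0)" "list_all2 par ts0 ts0'"
        by blast
      have "whead\<^sup>*\<^sup>* (apps v us) (apps a (ts0 @ us))"
        using wheads_app_ctx[OF ts0(1), of us] by (simp add: apps_append)
      moreover have "list_all2 par (ts0 @ us) ts'"
        using ts0(2) pus ts0'(2) by (simp add: list_all2_appendI)
      ultimately show ?thesis by blast
    next
      fix i p' u1' rest' assume h: "i < j" "us' = u1' # rest'" "(whead ^^ i) v' (Lam p')"
        "(whead ^^ (j - i - 1)) (apps (subst 0 u1' p') rest') (apps a ts')"
      from redex[OF h(1) j h(2,3)] obtain x where x: "whead\<^sup>*\<^sup>* (apps v us) x"
        "Q (j - i - 1) x (apps (subst 0 u1' p') rest')" by blast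
      from QD1[OF x(2) order_refl a h(4)] obtain ts where "whead\<^sup>*\<^sup>* x (apps a ts)" "list_all2 par ts ts'"
        by blast
      then show ?thesis using x(1) by (meson rtranclp_trans)
    qed
  next
    fix j p' assume j: "j \<le> k" and red: "(whead ^^ j) (apps v' us') (Lam p')"
    from whead_pow_apps[OF red] show "\<exists>p. whead\<^sup>*\<^sup>* (apps v us) (Lam p) \<and> par p p'"
    proof (elim disjE exE conjE)
      fix T0 assume T0: "(whead ^^ j) v' T0" "Lam p' = apps T0 us'"
      have "us' = []"
      proof (cases us')
        case (Cons a l)
        then have "apps T0 us' \<noteq> Lam p'" using apps_Cons_not_Lam[of T0 a l p'] by simp
        then show ?thesis using T0(2) by simp
      qed
      with pus have "us = []" by simp
      from T0 \<open>us' = []\<close> have "(whead ^^ j) v' (Lam p')" by simp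
      from QD2[OF qv j this] show ?thesis using \<open>us = []\<close> by simp
    next
      fix i p'' u1' rest' assume h: "i < j" "us' = u1' # rest'" "(whead ^^ i) v' (Lam p'')"
        "(whead ^^ (j - i - 1)) (apps (subst 0 u1' p'') rest') (Lam p')"
      from redex[OF h(1) j h(2,3)] obtain x where x: "whead\<^sup>*\<^sup>* (apps v us) x"
        "Q (j - i - 1) x (apps (subst 0 u1' p'') rest')" by blast
      from QD2[OF x(2) order_refl h(4)] obtain p where "whead\<^sup>*\<^sup>* x (Lam p)" "par p p'"
        by blast
      then show ?thesis using x(1) by (meson rtranclp_trans)
    qed
  qed
qed

inductive fs :: "'c trm \<Rightarrow> bool" where
  fs_base: "(\<forall>x y. t \<noteq> App x y) \<Longrightarrow> fs t"
| fs_app: "fs x \<Longrightarrow> fs (App x y)"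

lemma fs_decomp: "fs t \<Longrightarrow> \<exists>h rs. t = apps h rs \<and> (\<forall>x y. h \<noteq> App x y)"
proof (induction rule: fs.induct)
  case (fs_base t) then show ?case by (intro exI[of _ t] exI[of _ "[]"]) simp
next
  case (fs_app x y)
  then obtain h rs where "x = apps h rs" "\<forall>x y. h \<noteq> App x y" by blast
  then show ?case by (intro exI[of _ h] exI[of _ "rs @ [y]"]) simp
qed

lemma fs_ssub: "fs t \<Longrightarrow> t = ssub \<sigma> r \<Longrightarrow> fs r"
proof (induction arbitrary: r rule: fs.induct)
  case (fs_base t)
  then show ?case by (cases r) (auto intro: fs.intros)
next
  case (fs_app x y)
  then show ?case by (cases r) (auto intro: fs.intros)
qed

lemma fs_apps: "fs h \<Longrightarrow> fs (apps h ts)"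
  by (induction ts rule: rev_induct) (auto intro: fs.intros)

lemma whead_fs: "whead x y \<Longrightarrow> fs x"
  by (induction rule: whead.induct) (auto intro: fs.intros)

lemma Q_nonfs: "\<not> fs t' \<Longrightarrow> Q k t t'"
proof -
  assume nf: "\<not> fs t'"
  have "fs t'" if "(whead ^^ j) t' T" "fs T" for j T
  proof (cases j)
    case 0 then show ?thesis using that by simp
  next
    case (Suc n)
    then have "(whead ^^ Suc n) t' T" using that by simp
    then obtain z where "whead t' z" using relpowp_Suc_D2[of n whead t' T] by blast
    then show ?thesis by (rule whead_fs)
  qed
  moreover have "fs (apps a ts)" if "is_atom a" for a :: "'c trm" and ts
    using that by (intro fs_apps fs_base) (auto simp: is_atom_def)
  moreover have "fs (Lam p)" for p :: "'c trm" by (rule fs_base) simp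
  ultimately show ?thesis using nf unfolding Q_def by blast
qed


lemma par_up: "\<forall>i. par (\<sigma> i) (\<sigma>' i) \<Longrightarrow> par (up \<sigma> i) (up \<sigma>' i)"
proof (cases i)
  case 0 then show ?thesis by (simp add: p_refl)
next
  case (Suc n)
  assume "\<forall>i. par (\<sigma> i) (\<sigma>' i)"
  then have "par (ssub (\<lambda>i. Var (Suc i)) (\<sigma> n)) (ssub (\<lambda>i. Var (Suc i)) (\<sigma>' n))"
    by (intro p_sub) (auto intro: p_refl)
  then show ?thesis using Suc by (simp add: lift1)
qed

lemma par_ssub: "par s s' \<Longrightarrow> \<forall>i. par (\<sigma> i) (\<sigma>' i) \<Longrightarrow> par (ssub \<sigma> s) (ssub \<sigma>' s')"
  by (rule p_sub)

lemma main: "par (t::'c trm) t' \<Longrightarrow> Q k t t'"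
proof (induction k arbitrary: t t' rule: less_induct)
  case (less k)
  have IH: "\<forall>m<k. \<forall>x x' :: 'c trm. par x x' \<longrightarrow> Q m x x'" using less.IH by blast
  have gen: "Q k (ssub \<sigma> s) (ssub \<sigma>' s')"
    if "par s s'" "\<forall>i. par (\<sigma> i) (\<sigma>' i) \<and> Q k (\<sigma> i) (\<sigma>' i)" for s s' :: "'c trm" and \<sigma> \<sigma>'
    using that
  proof (induction s s' arbitrary: \<sigma> \<sigma>' rule: par.induct)
    case (p_refl r)
    have pars: "\<forall>i. par (\<sigma> i) (\<sigma>' i)" using p_refl.prems by blast
    show ?case
    proof (cases "fs (ssub \<sigma>' r)")
      case False then show ?thesis by (rule Q_nonfs)
    next
      case True
      have "fs r" by (rule fs_ssub[OF True refl])
      then obtain h rs where h: "r = apps h rs" "\<forall>x y. h \<noteq> App x y" using fs_decomp by blast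
      have ph: "par (ssub \<sigma> h) (ssub \<sigma>' h)" by (rule par_ssub[OF par.p_refl pars])
      have qh: "Q k (ssub \<sigma> h) (ssub \<sigma>' h)"
      proof (cases h)
        case (Var i) then show ?thesis using p_refl.prems by simp
      next
        case (Cst c) then show ?thesis by (simp add: Q_atom is_atom_def)
      next
        case (Lam p)
        have "par (ssub (up \<sigma>) p) (ssub (up \<sigma>') p)"
          by (rule par_ssub[OF par.p_refl]) (use par_up[OF pars] in blast)
        then show ?thesis using Lam by (simp add: Q_Lam)
      next
        case (App x y) then show ?thesis using h by blast
      qed
      have "list_all2 par (map (ssub \<sigma>) rs) (map (ssub \<sigma>') rs)"
        by (simp add: list_all2_map1 list_all2_map2 list_all2_refl par_ssub[OF par.p_refl pars])
      from Q_APP[OF IH ph qh this] show ?thesis using h(1) by (simp add: ssub_apps)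
    qed
  next
    case (p_app s s' u u')
    have pars: "\<forall>i. par (\<sigma> i) (\<sigma>' i)" using p_app.prems by blast
    have ph: "par (ssub \<sigma> s) (ssub \<sigma>' s')" by (rule par_ssub[OF p_app.hyps(1) pars])
    have qh: "Q k (ssub \<sigma> s) (ssub \<sigma>' s')" by (rule p_app.IH(1)[OF p_app.prems])
    have "list_all2 par [ssub \<sigma> u] [ssub \<sigma>' u']" using par_ssub[OF p_app.hyps(2) pars] by simp
    from Q_APP[OF IH ph qh this] show ?case by simp
  next
    case (p_lam s s')
    have pars: "\<forall>i. par (\<sigma> i) (\<sigma>' i)" using p_lam.prems by blast
    have "par (ssub (up \<sigma>) s) (ssub (up \<sigma>') s')"
      by (rule par_ssub[OF p_lam.hyps(1)]) (use par_up[OF pars] in blast)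
    then show ?case by (simp add: Q_Lam)
  next
    case (p_beta s s' u u')
    have pars: "\<forall>i. par (\<sigma> i) (\<sigma>' i)" using p_beta.prems by blast
    have qu: "Q k (ssub \<sigma> u) (ssub \<sigma>' u')" by (rule p_beta.IH(2)[OF p_beta.prems])
    have pu: "par (ssub \<sigma> u) (ssub \<sigma>' u')" by (rule par_ssub[OF p_beta.hyps(2) pars])
    have good: "\<forall>i. par (scons2 (ssub \<sigma> u) \<sigma> i) (scons2 (ssub \<sigma>' u') \<sigma>' i) \<and>
        Q k (scons2 (ssub \<sigma> u) \<sigma> i) (scons2 (ssub \<sigma>' u') \<sigma>' i)"
      using p_beta.prems qu pu by (auto simp: scons2_def split: nat.split)
    have "Q k (ssub (scons2 (ssub \<sigma> u) \<sigma>) s) (ssub (scons2 (ssub \<sigma>' u') \<sigma>') s')"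
      by (rule p_beta.IH(1)[OF good])
    then have "Q k (subst 0 (ssub \<sigma> u) (ssub (up \<sigma>) s)) (ssub \<sigma>' (subst 0 u' s'))"
      by (simp add: subst_up ssub_subst0)
    moreover have "whead (ssub \<sigma> (App (Lam s) u)) (subst 0 (ssub \<sigma> u) (ssub (up \<sigma>) s))"
      by (simp add: whead.intros)
    ultimately show ?case by (rule Q_step[rotated])
  next
    case (p_sub s s' \<rho> \<rho>')
    have eq1: "ssub \<sigma> (ssub \<rho> s) = ssub (\<lambda>i. ssub \<sigma> (\<rho> i)) s" by (rule ssub_ssub) simp
    have eq2: "ssub \<sigma>' (ssub \<rho>' s') = ssub (\<lambda>i. ssub \<sigma>' (\<rho>' i)) s'" by (rule ssub_ssub) simp
    have pars: "\<forall>i. par (\<sigma> i) (\<sigma>' i)" using p_sub.prems by blast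
    have good: "\<forall>i. par (ssub \<sigma> (\<rho> i)) (ssub \<sigma>' (\<rho>' i)) \<and> Q k (ssub \<sigma> (\<rho> i)) (ssub \<sigma>' (\<rho>' i))"
      using p_sub.IH(2) p_sub.prems pars by (blast intro: par_ssub)
    show ?case unfolding eq1 eq2 by (rule p_sub.IH(1)[OF good])
  qed
  have "Q k (ssub Var t) (ssub Var t')"
    by (rule gen[OF less.prems]) (auto intro: par.p_refl Q_atom simp: is_atom_def)
  then show ?case by (simp add: ssub_Var)
qed


lemma beta_par: "beta s s' \<Longrightarrow> par s s'"
  by (induction rule: beta.induct) (auto intro: par.intros)

lemma wheads_heads: "whead\<^sup>*\<^sup>* x y \<Longrightarrow> head\<^sup>*\<^sup>* x y"
  by (induction rule: rtranclp_induct) (auto intro: rtranclp.rtrancl_into_rtrancl head.intros)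

lemma heads_Lam: "head\<^sup>*\<^sup>* x y \<Longrightarrow> head\<^sup>*\<^sup>* (Lam x) (Lam y)"
  by (induction rule: rtranclp_induct) (auto intro: rtranclp.rtrancl_into_rtrancl head.intros)

lemma heads_from_Lam: "head\<^sup>*\<^sup>* (Lam x) y \<Longrightarrow> \<exists>y'. y = Lam y'"
proof (induction rule: rtranclp_induct)
  case (step y z)
  then obtain y' where "y = Lam y'" by blast
  from step.hyps(2)[unfolded \<open>y = Lam y'\<close>] show ?case
  proof (cases rule: head.cases)
    case 1 then show ?thesis using no_whead_Lam by blast
  qed blast
qed simp

lemma wheads_from_Lam: "whead\<^sup>*\<^sup>* (Lam x) y \<Longrightarrow> y = Lam x"
  by (induction rule: rtranclp_induct) (auto simp: no_whead_Lam)

lemma heads_to_wheads: "head\<^sup>*\<^sup>* y T \<Longrightarrow> (\<forall>p. T \<noteq> Lam p) \<Longrightarrow> whead\<^sup>*\<^sup>* y T"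
proof (induction rule: converse_rtranclp_induct)
  case base then show ?case by simp
next
  case (step y y1)
  from step.hyps(1) show ?case
  proof (cases rule: head.cases)
    case 1 then show ?thesis using step by (auto intro: converse_rtranclp_into_rtranclp)
  next
    case (2 s s')
    then show ?thesis using heads_from_Lam[of s' T] step.hyps(2) step.prems by auto
  qed
qed

lemma heads_Lam_split: "head\<^sup>*\<^sup>* y (Lam Z) \<Longrightarrow> \<exists>p'. whead\<^sup>*\<^sup>* y (Lam p') \<and> head\<^sup>*\<^sup>* p' Z"
proof (induction rule: converse_rtranclp_induct)
  case base then show ?case by auto
next
  case (step y y1)
  then obtain p1 where p1: "whead\<^sup>*\<^sup>* y1 (Lam p1)" "head\<^sup>*\<^sup>* p1 Z" by blast
  from step.hyps(1) show ?case
  proof (cases rule: head.cases)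
    case 1 then show ?thesis using p1 by (auto intro: converse_rtranclp_into_rtranclp)
  next
    case (2 s s')
    then have "Lam p1 = Lam s'" using p1(1) wheads_from_Lam by metis
    then have "head\<^sup>*\<^sup>* s Z" using 2 p1(2) by (auto intro: converse_rtranclp_into_rtranclp)
    then show ?thesis using 2 by auto
  qed
qed

lemma lams_0[simp]: "lams 0 X = X" and lams_Suc[simp]: "lams (Suc n) X = Lam (lams n X)"
  by (simp_all add: lams_def)

lemma heads_par:
  fixes x :: "'c trm"
  shows "par x y \<Longrightarrow> head\<^sup>*\<^sup>* y (lams n (apps a ts')) \<Longrightarrow> is_atom a \<Longrightarrow>
    \<exists>ts. head\<^sup>*\<^sup>* x (lams n (apps a ts))"
proof (induction n arbitrary: x y ts')
  case 0
  have "\<forall>p. apps a ts' \<noteq> Lam p" using apps_atom_not_Lam[OF 0(3)] by blast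
  then have w: "whead\<^sup>*\<^sup>* y (apps a ts')"
    using heads_to_wheads 0(2) by simp
  obtain j where "(whead ^^ j) y (apps a ts')" using rtranclp_imp_relpowp[OF w] by blast
  from QD1[OF main[OF 0(1)] order_refl 0(3) this] obtain ts where "whead\<^sup>*\<^sup>* x (apps a ts)" by blast
  then show ?case using wheads_heads by auto
next
  case (Suc n)
  from Suc.prems(2) have "head\<^sup>*\<^sup>* y (Lam (lams n (apps a ts')))" by simp
  from heads_Lam_split[OF this] obtain p' where p': "whead\<^sup>*\<^sup>* y (Lam p')" "head\<^sup>*\<^sup>* p' (lams n (apps a ts'))"
    by blast
  obtain j where "(whead ^^ j) y (Lam p')" using rtranclp_imp_relpowp[OF p'(1)] by blast
  from QD2[OF main[OF Suc.prems(1)] order_refl this] obtain p where p: "whead\<^sup>*\<^sup>* x (Lam p)" "par p p'"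
    by blast
  from Suc.IH[OF p(2) p'(2) Suc.prems(3)] obtain ts where "head\<^sup>*\<^sup>* p (lams n (apps a ts))" by blast
  then have "head\<^sup>*\<^sup>* (Lam p) (lams (Suc n) (apps a ts))" by (simp add: heads_Lam)
  then show ?case using rtranclp_trans[OF wheads_heads[OF p(1)]] by blast
qed

definition HD :: "'c \<Rightarrow> 'c trm \<Rightarrow> bool" where
  "HD bt t \<longleftrightarrow> (\<exists>n a ts. is_atom a \<and> a \<noteq> Cst bt \<and> head\<^sup>*\<^sup>* t (lams n (apps a ts)))"

lemma has_hnf_HD: "has_hnf bt t \<Longrightarrow> HD bt t"
proof -
  assume "has_hnf bt t"
  then obtain h where h: "beta\<^sup>*\<^sup>* t h" "is_hnf bt h" unfolding has_hnf_def by blast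
  then obtain n a ts0 where a: "is_atom a" "a \<noteq> Cst bt" "h = lams n (apps a ts0)"
    unfolding is_hnf_def by blast
  have "\<exists>ts. head\<^sup>*\<^sup>* t (lams n (apps a ts))"
    using h(1)
  proof (induction rule: converse_rtranclp_induct)
    case base then show ?case using a(3) by blast
  next
    case (step y z)
    then obtain ts where "head\<^sup>*\<^sup>* z (lams n (apps a ts))" by blast
    from heads_par[OF beta_par[OF step.hyps(1)] this a(1)] show ?case .
  qed
  then show ?thesis unfolding HD_def using a by blast
qed

definition mk :: "'c \<Rightarrow> 'c trm \<Rightarrow> nat \<times> 'c trm \<times> 'c trm list" where
  "mk bt t = (if HD bt t then (SOME (n, a, ts). is_atom a \<and> a \<noteq> Cst bt \<and> head\<^sup>*\<^sup>* t (lams n (apps a ts)))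
     else (0, Cst bt, []))"

primcorec gen :: "'c \<Rightarrow> nat \<times> 'c trm \<times> 'c trm list \<Rightarrow> 'c trm" where
  "gen bt st = (if fst st \<noteq> 0 then Lam (gen bt (fst st - 1, fst (snd st), snd (snd st)))
     else if snd (snd st) = [] then fst (snd st)
     else App (gen bt (0, fst (snd st), butlast (snd (snd st)))) (gen bt (mk bt (last (snd (snd st))))))"


lemma gen_Suc: "gen bt (Suc n, a, ts) = Lam (gen bt (n, a, ts))"
  by (subst gen.code) simp

lemma gen_Nil: "gen bt (0, a, []) = a"
  by (subst gen.code) simp

lemma gen_snoc: "gen bt (0, a, ts @ [u]) = App (gen bt (0, a, ts)) (gen bt (mk bt u))"
  by (subst gen.code) simp

lemma gen_lams: "gen bt (n, a, ts) = lams n (apps a (map (\<lambda>u. gen bt (mk bt u)) ts))"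
proof (induction n)
  case 0
  show ?case by (induction ts rule: rev_induct) (simp_all add: gen_Nil gen_snoc)
next
  case (Suc n) then show ?case by (simp add: gen_Suc)
qed

theorem lemma5p37:
  fixes bt :: 'c and t :: "'c trm"
  shows "\<exists>s. infN bt t s"
proof -
  have "infN bt t (gen bt (mk bt t))"
  proof (rule infN.coinduct[where X = "\<lambda>x1 x2. x2 = gen bt (mk bt x1)"])
    show "gen bt (mk bt t) = gen bt (mk bt t)" ..
  next
    fix x1 x2 assume x2: "x2 = gen bt (mk bt x1)"
    show "(\<exists>t. x1 = t \<and> x2 = Cst bt \<and> \<not> has_hnf bt t) \<or>
        (\<exists>a t n ts ts'. x1 = t \<and> x2 = lams n (apps a ts') \<and> is_atom a \<and> a \<noteq> Cst bt \<and>
          head\<^sup>*\<^sup>* t (lams n (apps a ts)) \<and>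
          list_all2 (\<lambda>u v. v = gen bt (mk bt u) \<or> infN bt u v) ts ts')"
    proof (cases "HD bt x1")
      case True
      define P where "P = (\<lambda>(n, a, ts). is_atom a \<and> a \<noteq> Cst bt \<and> head\<^sup>*\<^sup>* x1 (lams n (apps a ts)))"
      have ex: "\<exists>z. P z" using True unfolding HD_def P_def by auto
      have mk: "mk bt x1 = (SOME z. P z)" using True unfolding mk_def P_def by simp
      obtain n a ts where nat: "mk bt x1 = (n, a, ts)" by (cases "mk bt x1") auto
      have "P (n, a, ts)" using someI_ex[OF ex] mk nat by simp
      then have h: "is_atom a" "a \<noteq> Cst bt" "head\<^sup>*\<^sup>* x1 (lams n (apps a ts))"
        unfolding P_def by simp_all
      have x2': "x2 = lams n (apps a (map (\<lambda>u. gen bt (mk bt u)) ts))"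
        using x2 nat by (simp add: gen_lams)
      have "list_all2 (\<lambda>u v. v = gen bt (mk bt u) \<or> infN bt u v) ts (map (\<lambda>u. gen bt (mk bt u)) ts)"
        by (simp add: list_all2_map2 list_all2_refl)
      then show ?thesis using h x2' by blast
    next
      case False
      then have "mk bt x1 = (0, Cst bt, [])" unfolding mk_def by simp
      then have "x2 = Cst bt" using x2 by (simp add: gen_Nil)
      moreover have "\<not> has_hnf bt x1" using False has_hnf_HD[of bt x1] by blast
      ultimately show ?thesis by blast
    qed
  qed
  then show ?thesis by blast
qed

end
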